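(* Let $N\ge 1$ and let $\boldsymbol{R}\in\mathbb{C}^{N\times N}$ be Hermitian and positive semi-definite, with eigenvalues $\lambda_1\le\cdots\le\lambda_N$, where $\lambda_N>0$. Let $\boldsymbol{e}_N$ be a unit-norm eigenvector of $\boldsymbol{R}$ for the eigenvalue $\lambda_N$, and let $\boldsymbol{d}\in\Omega^N$ be defined by $\boldsymbol{d}(i)=e^{j\arg(\boldsymbol{e}_N(i))}$ if $\boldsymbol{e}_N(i)\neq 0$ and $\boldsymbol{d}(i)=e^{j0}=1$ if $\boldsymbol{e}_N(i)=0$. Let $V_{\mathcal{D}}=\boldsymbol{d}^H\boldsymbol{R}\boldsymbol{d}$ and $V_{opt}=\max_{\boldsymbol{s}\in\Omega^N}\boldsymbol{s}^H\boldsymbol{R}\boldsymbol{s}$. Then \[ \frac{V_{\mathcal{D}}}{V_{opt}}\ \ge\ \frac{\lambda_N+(N-1)\lambda_1}{\lambda_N N}. \]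
   Context: $\Omega=\{x\in\mathbb{C}: |x|=1\}$ is the complex unit circle and $j$ is the imaginary unit. $\arg(x)$ denotes the argument of a complex number $x$, and $\boldsymbol{e}_N(i)$ is the $i$th entry of $\boldsymbol{e}_N$. The vector $\boldsymbol{d}$ is the output of the "dominant-eigenvector-matching" heuristic for the unimodular quadratic program $\max_{\boldsymbol{s}\in\Omega^N}\boldsymbol{s}^H\boldsymbol{R}\boldsymbol{s}$. *)

theory Defs
  imports "HOL-Analysis.Analysis"
begin

text \<open>Quadratic form s^H R s for complex N x N matrices, indexed by a finite type 'n (N = CARD('n)).\<close>
definition quadform :: "complex^'n^'n \<Rightarrow> complex^'n \<Rightarrow> complex" where
  "quadform R s = (\<Sum>i\<in>UNIV. cnj (s$i) * (R *v s)$i)"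

definition hermitian :: "complex^'n^'n \<Rightarrow> bool" where
  "hermitian R \<longleftrightarrow> (\<forall>i j. R$i$j = cnj (R$j$i))"

definition psd :: "complex^'n^'n \<Rightarrow> bool" where
  "psd R \<longleftrightarrow> (\<forall>x. quadform R x \<in> \<real> \<and> 0 \<le> Re (quadform R x))"

definition is_eigenvalue :: "complex^'n^'n \<Rightarrow> complex \<Rightarrow> bool" where
  "is_eigenvalue R \<mu> \<longleftrightarrow> (\<exists>v. v \<noteq> 0 \<and> R *v v = \<mu> *s v)"

definition unimodular :: "(complex^'n) set" where
  "unimodular = {s. \<forall>i. norm (s$i) = 1}"

definition dem_vec :: "complex^'n \<Rightarrow> complex^'n" where
  "dem_vec e = (\<chi> i. if e$i \<noteq> 0 then exp (\<i> * complex_of_real (Arg (e$i))) else exp (\<i> * 0))"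

end

theory Submission
  imports Defs
begin

definition cinner :: "complex^'n \<Rightarrow> complex^'n \<Rightarrow> complex" where
  "cinner x y = (\<Sum>i\<in>UNIV. cnj (x$i) * y$i)"

lemma quadform_cinner: "quadform R s = cinner s (R *v s)"
  by (simp add: quadform_def cinner_def)

lemma cinner_add_left: "cinner (x + y) z = cinner x z + cinner y z"
  by (simp add: cinner_def algebra_simps sum.distrib)
lemma cinner_add_right: "cinner z (x + y) = cinner z x + cinner z y"
  by (simp add: cinner_def algebra_simps sum.distrib)
lemma cinner_diff_left: "cinner (x - y) z = cinner x z - cinner y z"
  by (simp add: cinner_def algebra_simps sum_subtractf)
lemma cinner_diff_right: "cinner z (x - y) = cinner z x - cinner z y"
  by (simp add: cinner_def algebra_simps sum_subtractf)
lemma cinner_scale_left: "cinner (c *s x) z = cnj c * cinner x z"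
  by (simp add: cinner_def algebra_simps sum_distrib_left)
lemma cinner_scale_right: "cinner z (c *s x) = c * cinner z x"
  by (simp add: cinner_def algebra_simps sum_distrib_left)
lemma cinner_cnj: "cnj (cinner x y) = cinner y x"
  by (simp add: cinner_def mult.commute)
lemma cinner_self: "cinner z z = of_real (norm z ^ 2)"
proof -
  have "cinner z z = (\<Sum>i\<in>UNIV. of_real (norm (z$i) ^ 2))"
    unfolding cinner_def by (intro sum.cong refl) (metis complex_norm_square mult.commute of_real_power)
  also have "\<dots> = of_real (\<Sum>i\<in>UNIV. norm (z$i) ^ 2)" by simp
  also have "(\<Sum>i\<in>UNIV. norm (z$i) ^ 2) = norm z ^ 2"
    by (simp add: norm_vec_def L2_set_def sum_nonneg)
  finally show ?thesis .
qed

lemma mv_scale: "R *v (c *s x) = c *s (R *v (x :: complex^'n))"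
  by (simp add: vec_eq_iff matrix_vector_mult_def sum_distrib_left algebra_simps)

lemma mv_uminus: "(- R) *v x = - (R *v (x :: complex^'n))"
  by (simp add: vec_eq_iff matrix_vector_mult_def sum_negf)

lemma herm_adj:
  assumes "hermitian R"
  shows "cinner x (R *v y) = cinner (R *v x) y"
proof -
  have "cinner x (R *v y) = (\<Sum>i\<in>UNIV. \<Sum>j\<in>UNIV. cnj (x$i) * R$i$j * y$j)"
    by (simp add: cinner_def matrix_vector_mult_def sum_distrib_left mult.assoc)
  also have "\<dots> = (\<Sum>j\<in>UNIV. \<Sum>i\<in>UNIV. cnj (x$i) * R$i$j * y$j)"
    by (rule sum.swap)
  also have "\<dots> = cinner (R *v x) y"
  proof -
    have h: "cnj (R$j$i) = R$i$j" for i j using assms unfolding hermitian_def by (metis complex_cnj_cnj)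
    show ?thesis
      unfolding cinner_def matrix_vector_mult_def
      by (simp only: vec_lambda_beta cnj_sum sum_distrib_right complex_cnj_mult)
        (intro sum.cong refl, simp add: h mult.commute mult.left_commute)
  qed
  finally show ?thesis .
qed

lemma hermitian_uminus: "hermitian R \<Longrightarrow> hermitian (- R)"
  unfolding hermitian_def by (metis complex_cnj_minus vector_uminus_component)

lemma quad_expand:
  "quadform R (x + y) = quadform R x + cinner x (R *v y) + cinner y (R *v x) + quadform R y"
  by (simp add: quadform_cinner matrix_vector_right_distrib cinner_add_left cinner_add_right)

lemma quad_scale: "quadform R (c *s x) = cnj c * c * quadform R x"
  by (simp add: quadform_cinner mv_scale cinner_scale_left cinner_scale_right)

lemma quad_cont: "continuous_on UNIV (\<lambda>z. Re (quadform R z))"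
  unfolding quadform_def matrix_vector_mult_def
  by (intro continuous_intros)

lemma cinner_uminus_right: "cinner z (- x) = - cinner z x"
  by (simp add: cinner_def sum_negf)

lemma quad_uminus: "quadform (- R) z = - quadform R z"
  by (simp add: quadform_cinner mv_uminus cinner_uminus_right)

lemma quad_zero: "quadform R 0 = 0"
  by (simp add: quadform_def)

lemma ofreal_scale: "complex_of_real r *s (x :: complex^'n) = r *\<^sub>R x"
  apply (simp add: vec_eq_iff)
  apply (simp add: scaleR_conv_of_real)
  done

lemma aux_real:
  fixes a b t :: real
  assumes "t = b/(1-a)" "a \<le> 0" "2*t*b + t^2*a \<le> 0"
  shows "b = 0"
proof -
  have pos: "1 - a > 0" using assms by simp
  have ts: "t * (1 - a) = b" using assms(1) pos by simp
  have "(1-a)^2 * (2*t*b + t^2*a) \<le> 0"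
    using assms(3) by (simp add: mult_nonneg_nonpos)
  moreover have "(1-a)^2 * (2*t*b + t^2*a) = 2*b*(t*(1-a))*(1-a) + a*(t*(1-a))^2"
    by (simp add: algebra_simps power2_eq_square)
  ultimately have "b^2 * (2 - a) \<le> 0" unfolding ts by (simp add: algebra_simps power2_eq_square)
  moreover have "2 - a > 0" using assms by simp
  ultimately have "b^2 \<le> 0" by (simp add: mult_le_0_iff)
  then show ?thesis by simp
qed

lemma max_eig:
  fixes R :: "complex^'n^'n"
  assumes herm: "hermitian R"
  shows "\<exists>x M. x \<noteq> 0 \<and> R *v x = complex_of_real M *s x \<and> (\<forall>z. Re (quadform R z) \<le> M * norm z ^ 2)"
proof -
  define f where "f z = Re (quadform R z)" for z
  have ne: "sphere (0::complex^'n) 1 \<noteq> {}" by simp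
  obtain x where xs: "x \<in> sphere 0 1" and xmax: "\<forall>y\<in>sphere 0 1. f y \<le> f x"
    using continuous_attains_sup[OF compact_sphere ne continuous_on_subset[OF quad_cont]]
    unfolding f_def by blast
  define M where "M = f x"
  have nx: "norm x = 1" using xs by simp
  have bound: "f z \<le> M * norm z ^ 2" for z
  proof (cases "z = 0")
    case True then show ?thesis by (simp add: f_def quad_zero)
  next
    case False
    define w where "w = (1 / norm z) *\<^sub>R z"
    have nw: "norm w = 1" using False by (simp add: w_def)
    have zw: "z = complex_of_real (norm z) *s w"
      using False by (simp add: ofreal_scale w_def)
    have "quadform R z = complex_of_real (norm z ^ 2) * quadform R w"
      by (subst zw, simp add: quad_scale power2_eq_square)
    then have "f z = norm z ^ 2 * f w" by (simp add: f_def)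
    moreover have "f w \<le> M" using xmax nw by (simp add: M_def)
    ultimately show ?thesis by (metis mult.commute mult_left_mono zero_le_power2)
  qed
  define u where "u = R *v x - complex_of_real M *s x"
  define a where "a = Re (quadform R u) - M * norm u ^ 2"
  define t where "t = norm u ^ 2 / (1 - a)"
  have a0: "a \<le> 0" using bound[of u] by (simp add: a_def f_def)
  define y where "y = x + complex_of_real t *s u"
  have qy: "quadform R y = quadform R x + complex_of_real t * (cinner x (R *v u) + cinner u (R *v x))
        + complex_of_real t * complex_of_real t * quadform R u"
    unfolding y_def quad_expand
    by (simp add: quad_scale mv_scale cinner_scale_left cinner_scale_right algebra_simps)
  have ny: "cinner y y = cinner x x + complex_of_real t * (cinner x u + cinner u x)
        + complex_of_real t * complex_of_real t * cinner u u"
    unfolding y_def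
    by (simp add: cinner_add_left cinner_add_right cinner_scale_left cinner_scale_right algebra_simps)
  have e1: "Re (cinner x (R *v u)) = Re (cinner u (R *v x))"
    by (metis herm herm_adj cinner_cnj complex_cnj_cnj cnj.simps(1))
  have e2: "Re (cinner x u) = Re (cinner u x)"
    by (metis cinner_cnj cnj.simps(1))
  have e3: "cinner u (R *v x) - complex_of_real M * cinner u x = cinner u u"
    by (simp add: u_def cinner_diff_right cinner_scale_right)
  have e3': "Re (cinner u (R *v x)) - M * Re (cinner u x) = norm u ^ 2"
    using arg_cong[OF e3, of Re] by (simp add: cinner_self)
  have fy: "Re (quadform R y) \<le> M * Re (cinner y y)"
    using bound[of y] by (simp add: f_def cinner_self)
  have "Re (quadform R x) = M" by (simp add: M_def f_def)
  moreover have "Re (cinner x x) = 1" using nx by (simp add: cinner_self)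
  ultimately have "M + t * 2 * Re (cinner u (R *v x)) + t * t * Re (quadform R u)
      \<le> M * (1 + t * 2 * Re (cinner u x) + t * t * norm u ^ 2)"
    using fy e1 e2 unfolding qy ny by (simp add: cinner_self mult.assoc)
  then have "2 * t * (norm u ^ 2) + t^2 * a \<le> 0"
    using e3' by (simp add: a_def algebra_simps power2_eq_square)
  then have "norm u ^ 2 = 0" using aux_real[OF t_def a0] by simp
  then have "u = 0" by simp
  then have "R *v x = complex_of_real M *s x" by (simp add: u_def)
  moreover have "x \<noteq> 0" using nx by auto
  ultimately show ?thesis using bound unfolding f_def by blast
qed

lemma phase_mult:
  assumes z: "(z::complex) \<noteq> 0"
  shows "cnj z * exp (\<i> * complex_of_real (Arg z)) = of_real (norm z)"
proof -
  have "exp (\<i> * complex_of_real (Arg z)) = sgn z" using z by (simp add: cis_conv_exp[symmetric] cis_Arg)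
  also have "sgn z = z / of_real (norm z)" by (simp add: sgn_div_norm scaleR_conv_of_real divide_inverse mult.commute)
  finally have "cnj z * exp (\<i> * complex_of_real (Arg z)) = (z * cnj z) / of_real (norm z)" by simp
  also have "\<dots> = of_real (norm z ^ 2) / of_real (norm z)" by (metis complex_norm_square of_real_power)
  also have "\<dots> = of_real (norm z)" using z by (simp add: power2_eq_square)
  finally show ?thesis .
qed

lemma norm_unimod:
  fixes s :: "complex^'n"
  assumes "s \<in> unimodular"
  shows "norm s ^ 2 = real CARD('n)"
proof -
  have "norm s = sqrt (\<Sum>i\<in>UNIV. (norm (s$i))^2)" by (simp add: norm_vec_def L2_set_def)
  also have "\<dots> = sqrt (real CARD('n))" using assms by (simp add: unimodular_def)
  finally show ?thesis by simp
qed

lemma scale_neg: "complex_of_real (- m) *s (x::complex^'n) = - (complex_of_real m *s x)"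
  by (simp add: vec_eq_iff)

theorem proposition1:
  fixes R :: "complex^'n^'n" and e :: "complex^'n" and lmin lmax :: real
  assumes herm: "hermitian R" and psd: "psd R"
    and lmin_eig: "is_eigenvalue R (complex_of_real lmin)"
    and lmax_eig: "is_eigenvalue R (complex_of_real lmax)"
    and bounds: "\<And>\<mu>. is_eigenvalue R \<mu> \<Longrightarrow> lmin \<le> Re \<mu> \<and> Re \<mu> \<le> lmax"
    and lmax_pos: "lmax > 0"
    and e_norm: "norm e = 1"
    and e_eig: "R *v e = complex_of_real lmax *s e"
  shows "Re (quadform R (dem_vec e)) / (SUP s\<in>unimodular. Re (quadform R s))
           \<ge> (lmax + (real CARD('n) - 1) * lmin) / (lmax * real CARD('n))"
proof -
  define N where "N = real CARD('n)"
  define d where "d = dem_vec e"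
  define f where "f s = Re (quadform R s)" for s
  have N1: "N \<ge> 1" unfolding N_def using card_ge_0_finite[of "UNIV :: 'n set"] by simp
  obtain x1 M1 where x1: "x1 \<noteq> 0" "R *v x1 = complex_of_real M1 *s x1"
    and b1: "\<And>z. Re (quadform R z) \<le> M1 * norm z ^ 2"
    using max_eig[OF herm] by blast
  have M1: "M1 \<le> lmax" using bounds[of "complex_of_real M1"] x1 unfolding is_eigenvalue_def by auto
  have upper: "f z \<le> lmax * norm z ^ 2" for z
    using b1[of z] M1 unfolding f_def by (smt (verit) mult_right_mono zero_le_power2)
  obtain x2 M2 where x2: "x2 \<noteq> 0" "(- R) *v x2 = complex_of_real M2 *s x2"
    and b2: "\<And>z. Re (quadform (- R) z) \<le> M2 * norm z ^ 2"
    using max_eig[OF hermitian_uminus[OF herm]] by blast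
  have "R *v x2 = complex_of_real (- M2) *s x2"
    using x2(2) unfolding mv_uminus scale_neg by (metis minus_minus)
  then have M2: "lmin \<le> - M2" using bounds[of "complex_of_real (- M2)"] x2 unfolding is_eigenvalue_def by auto
  have lower: "lmin * norm z ^ 2 \<le> f z" for z
  proof -
    have "- f z \<le> M2 * norm z ^ 2" using b2[of z] unfolding f_def quad_uminus by simp
    moreover have "lmin * norm z ^ 2 \<le> (- M2) * norm z ^ 2" using mult_right_mono[OF M2, of "norm z ^ 2"] by simp
    ultimately show ?thesis by simp
  qed
  obtain v where v: "v \<noteq> 0" "R *v v = complex_of_real lmin *s v"
    using lmin_eig unfolding is_eigenvalue_def by blast
  have "quadform R v = complex_of_real lmin * complex_of_real (norm v ^ 2)"
    using v by (simp add: quadform_cinner cinner_scale_right cinner_self)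
  then have "0 \<le> lmin * norm v ^ 2" using psd unfolding psd_def
    by (metis Re_complex_of_real of_real_mult)
  then have lmin0: "0 \<le> lmin" using v by (simp add: zero_le_mult_iff)
  have lminmax: "lmin \<le> lmax" using bounds[OF lmin_eig] by simp
  have dU: "d \<in> unimodular"
    unfolding d_def unimodular_def dem_vec_def by (simp add: norm_exp_i_times)
  have nd: "norm d ^ 2 = N" using norm_unimod[OF dU] by (simp add: N_def)
  define sig where "sig = (\<Sum>i\<in>UNIV. norm (e$i))"
  have c: "cinner e d = complex_of_real sig"
    unfolding cinner_def sig_def of_real_sum
  proof (intro sum.cong refl)
    fix i
    show "cnj (e$i) * d$i = complex_of_real (norm (e$i))"
      by (cases "e$i = 0") (simp_all add: d_def dem_vec_def phase_mult)
  qed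
  have "1 = norm e ^ 2" using e_norm by simp
  also have "\<dots> = (\<Sum>i\<in>UNIV. norm (e$i) ^ 2)" by (simp add: norm_vec_def L2_set_def sum_nonneg)
  also have "\<dots> \<le> sig" unfolding sig_def
  proof (intro sum_mono)
    fix i
    have "norm (e$i) \<le> norm e" unfolding norm_vec_def by (rule member_le_L2_set) simp_all
    then have "norm (e$i) \<le> 1" using e_norm by simp
    then show "norm (e$i) ^ 2 \<le> norm (e$i)"
      by (simp add: power2_eq_square mult_left_le_one_le)
  qed
  finally have sig1: "1 \<le> sig" .
  have sig2: "1 \<le> sig ^ 2" using sig1 by (simp add: one_le_power)
  define w where "w = d - complex_of_real sig *s e"
  have ce: "cinner e e = 1" using e_norm by (simp add: cinner_self)
  have cew: "cinner e w = 0" by (simp add: w_def cinner_diff_right cinner_scale_right c ce)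
  have cwe: "cinner w e = 0" using cew cinner_cnj[of e w] by simp
  have dsplit: "d = complex_of_real sig *s e + w" by (simp add: w_def)
  have t1: "cinner (complex_of_real sig *s e) (R *v w) = 0"
    by (simp add: herm_adj[OF herm] mv_scale e_eig cinner_scale_left cew)
  have t2: "cinner w (R *v (complex_of_real sig *s e)) = 0"
    by (simp add: mv_scale cinner_scale_right e_eig cwe)
  have qe: "quadform R e = complex_of_real lmax"
    by (simp add: quadform_cinner e_eig cinner_scale_right ce)
  have qd: "quadform R d = complex_of_real (sig ^ 2 * lmax) + quadform R w"
    by (subst dsplit, simp add: quad_expand t1 t2 quad_scale qe power2_eq_square)
  have "cinner (complex_of_real sig *s e + w) (complex_of_real sig *s e + w) = complex_of_real (sig^2) + cinner w w"
    by (simp add: cinner_add_left cinner_add_right cinner_scale_left cinner_scale_right ce cew cwe power2_eq_square)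
  then have "cinner d d = complex_of_real (sig^2) + cinner w w" using dsplit by simp
  then have "complex_of_real (norm d ^ 2) = complex_of_real (sig^2 + norm w^2)"
    by (simp only: cinner_self of_real_add)
  then have "norm d ^ 2 = sig^2 + norm w^2" by (simp only: of_real_eq_iff)
  then have nw: "norm w ^ 2 = N - sig ^ 2" using nd by simp
  have fd: "f d = sig ^ 2 * lmax + f w" unfolding f_def qd by simp
  have "f d \<ge> sig ^ 2 * lmax + lmin * (N - sig ^ 2)" using fd lower[of w] nw by simp
  moreover have "sig ^ 2 * lmax + lmin * (N - sig ^ 2) = lmin * N + sig ^ 2 * (lmax - lmin)"
    by (simp add: algebra_simps)
  moreover have "sig ^ 2 * (lmax - lmin) \<ge> 1 * (lmax - lmin)"
    using sig2 lminmax by (intro mult_right_mono) simp_all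
  ultimately have VD: "f d \<ge> lmax + (N - 1) * lmin" by (simp add: algebra_simps)
  define S where "S = (SUP s\<in>unimodular. f s)"
  have ub: "f s \<le> lmax * N" if "s \<in> unimodular" for s
    using upper[of s] norm_unimod[OF that] unfolding N_def by simp
  have bdd: "bdd_above (f ` unimodular)"
    by (rule bdd_aboveI2[of _ _ "lmax * N"]) (rule ub)
  have S1: "f d \<le> S" unfolding S_def by (rule cSUP_upper[OF dU bdd])
  have S2: "S \<le> lmax * N" unfolding S_def
    by (rule cSUP_least) (use dU ub in auto)
  have L0: "lmax + (N - 1) * lmin \<ge> lmax" using N1 lmin0 by simp
  have fdpos: "f d > 0" using VD L0 lmax_pos by linarith
  have Spos: "S > 0" using S1 fdpos by linarith
  have "(lmax + (N - 1) * lmin) / (lmax * N) \<le> f d / (lmax * N)"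
    using VD lmax_pos N1 by (intro divide_right_mono) simp_all
  also have "\<dots> \<le> f d / S"
    using S2 Spos fdpos by (intro divide_left_mono) simp_all
  finally show ?thesis unfolding S_def f_def d_def N_def .
qed

end
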